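(* Let $N>1$, $d\ge1$, and let $f:\mathbb{R}^{N\times d}\times\mathbb{R}^{N\times 3}\to Y$ (any set $Y$) satisfy $f(s,\vec r o^T)=f(s,\vec r)$ for all $o\in\mathrm{O}(3)$ and $f(s,\vec r+\mathbf{1}t)=f(s,\vec r)$ for all $t\in\mathbb{R}^{1\times 3}$, where $\mathbf 1\in\mathbb{R}^{N\times1}$ is the all-ones column. Let $g$ be any function with the properties stated in the context, and for each molecule $(s,\vec r)$ let $\vec E_1=g(\mathrm{LE}_1)$. Then there exist functions $\varphi$, $\rho$ and $h$ such that for all $(s,\vec r)$, $$f(s,\vec r)=h(z_1),\qquad z_1=\rho\Big(\sum_{j=1}^N\varphi\big(\mathrm{Concatenate}(\vec r_{1j}\vec E_1^T,\ \tilde s_j)\big)\Big).$$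
   Context: For a molecule with features $s\in\mathbb{R}^{N\times d}$ (row $s_j$) and coordinates $\vec r\in\mathbb{R}^{N\times 3}$ (row $\vec r_j$), set $\vec r_{ij}=\vec r_i-\vec r_j$, node identity features $\tilde s_j=\mathrm{Concatenate}(s_j,j)\in\mathbb{R}^{d+1}$ and local environments $\mathrm{LE}_i=\{(\tilde s_j,\vec r_{ij}): j=1,\dots,N\}$. $\mathrm{O}(3)=\{Q\in\mathbb{R}^{3\times3}:QQ^T=I\}$. The function $g$ maps such local environments to $\mathbb{R}^{3\times3}$, satisfies $g(\{(\tilde s_j,\vec r_{ij}o^T)\}_j)=g(\{(\tilde s_j,\vec r_{ij})\}_j)o^T$ for all $o\in\mathrm{O}(3)$, and for every molecule and $i$ the matrix $\vec E_i=g(\mathrm{LE}_i)$, with $k=\mathrm{rank}(\vec E_i)$, has its first $k$ rows forming an orthonormal basis of $\mathrm{span}\{\vec r_{ij}:j=1,\dots,N\}$ and its remaining rows zero. *)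

theory Defs
  imports "HOL-Analysis.Analysis"
begin

text \<open>A molecule with N nodes: features s :: real^'d^'n (row s$j), coordinates
  r :: real^3^'n (row r$j). The nodes are labelled 1..N by a bijection idx.\<close>

definition rel_pos :: "real^3^'n \<Rightarrow> 'n \<Rightarrow> 'n \<Rightarrow> real^3" where
  "rel_pos r i j = r$i - r$j"

definition node_feat :: "('n \<Rightarrow> nat) \<Rightarrow> real^'d^'n \<Rightarrow> 'n \<Rightarrow> (real^'d) \<times> real" where
  "node_feat idx s j = (s$j, real (idx j))"

definition local_env ::
  "('n \<Rightarrow> nat) \<Rightarrow> real^'d^'n \<Rightarrow> real^3^'n \<Rightarrow> 'n \<Rightarrow> (((real^'d) \<times> real) \<times> (real^3)) set" where
  "local_env idx s r i = {(node_feat idx s j, rel_pos r i j) | j. True}"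

text \<open>Properties of the frame function g. Rows of a 3x3 matrix E are E $ of_nat a, a = 1,2,3.
  A row vector times o^T corresponds to o *v (column vector); E o^T is E ** transpose o.\<close>
definition frame_fn ::
  "('n::finite \<Rightarrow> nat) \<Rightarrow> ((((real^'d) \<times> real) \<times> (real^3)) set \<Rightarrow> real^3^3) \<Rightarrow> bool" where
  "frame_fn idx g \<longleftrightarrow>
     (\<forall>(s::real^'d^'n) (r::real^3^'n) i (Q::real^3^3). orthogonal_matrix Q \<longrightarrow>
        g {(node_feat idx s j, Q *v rel_pos r i j) | j. True} = g (local_env idx s r i) ** transpose Q)
   \<and> (\<forall>(s::real^'d^'n) (r::real^3^'n) i.
        let E = g (local_env idx s r i); k = rank E in
          (\<forall>a\<in>{1..k}. \<forall>b\<in>{1..k}. (E $ of_nat a) \<bullet> (E $ of_nat b) = (if a = b then 1 else 0))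
        \<and> span {E $ of_nat a | a. a \<in> {1..k}} = span (range (rel_pos r i))
        \<and> (\<forall>a\<in>{k+1..3}. E $ of_nat a = 0))"

end

theory Submission
  imports Defs
begin

lemma mv_neg: "(A::real^'m^'k) *v (- x) = - (A *v x)"
  by (simp add: vec_eq_iff matrix_vector_mult_def sum_negf)

definition onb3 :: "real^3 \<Rightarrow> real^3 \<Rightarrow> real^3 \<Rightarrow> bool" where
  "onb3 u1 u2 u3 \<longleftrightarrow> norm u1 = 1 \<and> norm u2 = 1 \<and> norm u3 = 1 \<and>
     u1 \<bullet> u2 = 0 \<and> u1 \<bullet> u3 = 0 \<and> u2 \<bullet> u3 = 0"

lemma onb_from2:
  assumes "norm u1 = 1" "norm u2 = 1" "u1 \<bullet> u2 = 0"
  shows "onb3 u1 u2 (cross3 u1 u2)"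
proof -
  have "(norm (cross3 u1 u2))\<^sup>2 = 1" using norm_cross[of u1 u2] assms by simp
  hence "norm (cross3 u1 u2) = 1" using norm_ge_zero[of "cross3 u1 u2"] by (auto simp add: power2_eq_1_iff)
  thus ?thesis using assms dot_cross_self[of u1 u2] dot_cross_self[of u2 u1] unfolding onb3_def
    by (simp add: inner_commute)
qed

lemma onb_from1:
  assumes "norm u1 = (1::real)"
  shows "\<exists>u2 u3. onb3 u1 u2 u3"
proof -
  obtain y :: "real^3" where y: "y \<noteq> 0" "orthogonal u1 y"
    using orthogonal_to_vector_exists[of u1] by auto
  define u2 where "u2 = y /\<^sub>R norm y"
  have "norm u2 = 1" using y by (simp add: u2_def)
  moreover have "u1 \<bullet> u2 = 0" using y by (simp add: u2_def orthogonal_def)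
  ultimately show ?thesis using onb_from2 assms by blast
qed

lemma onb_exists: "\<exists>u1 u2 u3. onb3 u1 u2 u3"
  using onb_from1[of "axis 1 1"] by auto

lemma onb_matrix:
  assumes "onb3 u1 u2 u3"
  shows "orthogonal_matrix (\<chi> i. if i = 1 then u1 else if i = 2 then u2 else u3 :: real^3^3)"
  using assms unfolding orthogonal_matrix_orthonormal_rows onb3_def row_def
  apply (auto simp: orthogonal_def inner_commute)
  apply (metis exhaust_3)
  done

lemma frame_gen:
  fixes E :: "real^3^3" and u :: "nat \<Rightarrow> real^3"
  assumes onb: "\<And>a b. a \<in> {1..3} \<Longrightarrow> b \<in> {1..3} \<Longrightarrow> a \<noteq> b \<Longrightarrow> u a \<bullet> u b = 0"
    and lo: "\<And>a. a \<in> {1..3} \<Longrightarrow> a \<le> k \<Longrightarrow> u a = E $ of_nat a"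
    and hi: "\<And>a. a \<in> {1..3} \<Longrightarrow> k < a \<Longrightarrow> E $ of_nat a = 0"
    and k3: "k \<le> 3"
    and v: "v \<in> span {E $ of_nat a | a. a \<in> {1..k}}"
  shows "(\<chi> i. if i = 1 then u 1 else if i = 2 then u 2 else u 3) *v v = E *v v"
proof -
  have row: "u a \<bullet> v = E $ of_nat a \<bullet> v" if a: "a \<in> {1..3}" for a
  proof (cases "a \<le> k")
    case True then show ?thesis using lo a by simp
  next
    case False
    have "orthogonal (u a) v"
    proof (rule orthogonal_to_span[OF v])
      fix y assume "y \<in> {E $ of_nat a | a. a \<in> {1..k}}"
      then obtain b where b: "b \<in> {1..k}" "y = E $ of_nat b" by auto
      have "y = u b" using b lo k3 by auto
      moreover have "a \<noteq> b" using b False by auto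
      ultimately show "orthogonal (u a) y" using onb[of a b] a b k3 by (auto simp: orthogonal_def)
    qed
    then show ?thesis using hi[of a] a False by (simp add: orthogonal_def)
  qed
  show ?thesis
  proof (subst vec_eq_iff, intro allI)
    fix i :: 3
    have "i = of_nat 1 \<or> i = of_nat 2 \<or> i = of_nat 3" using exhaust_3[of i] by simp
    then show "((\<chi> i. if i = 1 then u 1 else if i = 2 then u 2 else u 3) *v v) $ i = (E *v v) $ i"
      unfolding matrix_vector_mul_component using row[of 1] row[of 2] row[of 3] by auto
  qed
qed

lemma frame_ext:
  fixes E :: "real^3^3"
  assumes k3: "k \<le> 3"
    and orth: "\<forall>a\<in>{1..k}. \<forall>b\<in>{1..k}. (E $ of_nat a) \<bullet> (E $ of_nat b) = (if a = b then 1 else 0)"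
    and zero: "\<forall>a\<in>{k+1..3}. E $ of_nat a = 0"
  shows "\<exists>Q. orthogonal_matrix Q \<and> (\<forall>v\<in>span {E $ of_nat a | a. a \<in> {1..k}}. Q *v v = E *v v)"
proof -
  have n1: "norm (E $ of_nat a) = 1" if "a \<in> {1..k}" for a
    using orth that by (simp add: norm_eq_1)
  have ex: "\<exists>u1 u2 u3. onb3 u1 u2 u3 \<and> (1 \<le> k \<longrightarrow> u1 = E $ 1) \<and> (2 \<le> k \<longrightarrow> u2 = E $ 2) \<and> (3 \<le> k \<longrightarrow> u3 = E $ 3)"
  proof -
    consider "k = 0" | "k = 1" | "k = 2" | "k = 3" using k3 by linarith
    then show ?thesis
    proof cases
      case 1 then show ?thesis using onb_exists by auto
    next
      case 2
      then have "norm (E $ 1) = 1" using n1[of 1] by simp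
      then show ?thesis using onb_from1 2 by auto
    next
      case 3
      have o12: "E $ of_nat 1 \<bullet> E $ of_nat 2 = (if (1::nat) = 2 then 1 else 0)"
        using 3 by (intro orth[rule_format]) auto
      have "norm (E $ 1) = 1" "norm (E $ 2) = 1" "E $ 1 \<bullet> E $ 2 = 0"
        using n1[of 1] n1[of 2] o12 3 by auto
      then show ?thesis using onb_from2 3 by fastforce
    next
      case 4
      have o: "E $ of_nat a \<bullet> E $ of_nat b = 0" if "a \<in> {1..3}" "b \<in> {1..3}" "a \<noteq> b" for a b
        using orth 4 that by auto
      have "onb3 (E $ 1) (E $ 2) (E $ 3)" unfolding onb3_def
        using n1[of 1] n1[of 2] n1[of 3] o[of 1 2] o[of 1 3] o[of 2 3] 4 by simp
      then show ?thesis using 4 by auto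
    qed
  qed
  then obtain u1 u2 u3 where u: "onb3 u1 u2 u3" "1 \<le> k \<longrightarrow> u1 = E $ 1" "2 \<le> k \<longrightarrow> u2 = E $ 2" "3 \<le> k \<longrightarrow> u3 = E $ 3"
    by blast
  define u where "u = (\<lambda>a::nat. if a = 1 then u1 else if a = 2 then u2 else u3)"
  have Qeq: "(\<chi> i. if i = 1 then u 1 else if i = 2 then u 2 else u 3) = (\<chi> i. if i = 1 then u1 else if i = 2 then u2 else u3 :: real^3^3)"
    unfolding u_def by simp
  show ?thesis
  proof (intro exI conjI ballI)
    show "orthogonal_matrix (\<chi> i. if i = 1 then u1 else if i = 2 then u2 else u3 :: real^3^3)"
      by (rule onb_matrix[OF u(1)])
  next
    fix v assume v: "v \<in> span {E $ of_nat a | a. a \<in> {1..k}}"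
    have "(\<chi> i. if i = 1 then u 1 else if i = 2 then u 2 else u 3) *v v = E *v v"
    proof (rule frame_gen[OF _ _ _ k3 v])
      fix a b :: nat assume "a \<in> {1..3}" "b \<in> {1..3}" "a \<noteq> b"
      then show "u a \<bullet> u b = 0" using u(1) unfolding onb3_def u_def
        by (auto simp: inner_commute)
    next
      fix a :: nat assume a: "a \<in> {1..3}" "a \<le> k"
      then have "a = 1 \<or> a = 2 \<or> a = 3" by auto
      then show "u a = E $ of_nat a" using u a unfolding u_def by (elim disjE) auto
    next
      fix a :: nat assume "a \<in> {1..3}" "k < a"
      then show "E $ of_nat a = 0" using zero by auto
    qed
    then show "(\<chi> i. if i = 1 then u1 else if i = 2 then u2 else u3 :: real^3^3) *v v = E *v v"
      by (simp only: Qeq)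
  qed
qed

theorem proposition7:
  fixes f :: "real^'d^'n \<Rightarrow> real^3^'n \<Rightarrow> 'y"
    and g :: "(((real^'d) \<times> real) \<times> (real^3)) set \<Rightarrow> real^3^3"
    and idx :: "'n \<Rightarrow> nat"
  assumes N_gt_1: "CARD('n) > 1"
    and idx_bij: "bij_betw idx UNIV {1..CARD('n)}"
    and f_O3: "\<forall>(Q::real^3^3) s r. orthogonal_matrix Q \<longrightarrow> f s (\<chi> j. Q *v (r $ j)) = f s r"
    and f_trans: "\<forall>s r (t::real^3). f s (\<chi> j. r $ j + t) = f s r"
    and g_frame: "frame_fn idx g"
  shows "\<exists>(\<phi> :: (real^3) \<times> ((real^'d) \<times> real) \<Rightarrow> ((real^3) \<times> ((real^'d) \<times> real))^'n)
           (\<rho> :: ((real^3) \<times> ((real^'d) \<times> real))^'n \<Rightarrow> ((real^3) \<times> ((real^'d) \<times> real))^'n)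
           (h :: ((real^3) \<times> ((real^'d) \<times> real))^'n \<Rightarrow> 'y).
         \<forall>s r. let n1 = inv idx 1; E1 = g (local_env idx s r n1) in
           f s r = h (\<rho> (\<Sum>j\<in>UNIV. \<phi> (E1 *v rel_pos r n1 j, node_feat idx s j)))"
proof -
  have inj: "inj idx" using idx_bij by (simp add: bij_betw_def)
  define \<phi> :: "(real^3) \<times> ((real^'d) \<times> real) \<Rightarrow> ((real^3) \<times> ((real^'d) \<times> real))^'n" where
    "\<phi> = (\<lambda>p. \<chi> m. if real (idx m) = snd (snd p) then p else 0)"
  define h :: "((real^3) \<times> ((real^'d) \<times> real))^'n \<Rightarrow> 'y" where
    "h = (\<lambda>z. f (\<chi> m. fst (snd (z $ m))) (\<chi> m. - fst (z $ m)))"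
  show ?thesis
  proof (intro exI allI)
    fix s :: "real^'d^'n" and r :: "real^3^'n"
    define n1 where "n1 = inv idx 1"
    define E1 where "E1 = g (local_env idx s r n1)"
    define Z where "Z = (\<Sum>j\<in>UNIV. \<phi> (E1 *v rel_pos r n1 j, node_feat idx s j))"
    have Zm: "Z $ m = (E1 *v rel_pos r n1 m, node_feat idx s m)" for m
    proof -
      have "Z $ m = (\<Sum>j\<in>UNIV. (if j = m then (E1 *v rel_pos r n1 j, node_feat idx s j) else 0))"
        unfolding Z_def sum_component
      proof (rule sum.cong)
        fix j assume "j \<in> (UNIV :: 'n set)"
        have "(real (idx m) = real (idx j)) = (j = m)" using inj by (auto simp: inj_def)
        then show "\<phi> (E1 *v rel_pos r n1 j, node_feat idx s j) $ m =
          (if j = m then (E1 *v rel_pos r n1 j, node_feat idx s j) else 0)"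
          by (simp add: \<phi>_def node_feat_def)
      qed simp
      also have "\<dots> = (E1 *v rel_pos r n1 m, node_feat idx s m)" by simp
      finally show ?thesis .
    qed
    have hZ: "h (id Z) = f s (\<chi> m. - (E1 *v rel_pos r n1 m))"
      by (simp add: h_def Zm node_feat_def)
    obtain k where k: "k = rank E1" by blast
    have props: "(\<forall>a\<in>{1..k}. \<forall>b\<in>{1..k}. (E1 $ of_nat a) \<bullet> (E1 $ of_nat b) = (if a = b then 1 else 0))
        \<and> span {E1 $ of_nat a | a. a \<in> {1..k}} = span (range (rel_pos r n1))
        \<and> (\<forall>a\<in>{k+1..3}. E1 $ of_nat a = 0)"
      using g_frame unfolding frame_fn_def E1_def k by (simp add: Let_def)
    have k3: "k \<le> 3" using rank_bound[of E1] k by simp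
    obtain Q where Q: "orthogonal_matrix Q"
      and QE: "\<And>v. v \<in> span {E1 $ of_nat a | a. a \<in> {1..k}} \<Longrightarrow> Q *v v = E1 *v v"
      using frame_ext[OF k3] props by blast
    have Qm: "Q *v (r $ m + - r $ n1) = - (E1 *v rel_pos r n1 m)" for m
    proof -
      have "rel_pos r n1 m \<in> span (range (rel_pos r n1))" by (simp add: span_base)
      then have "- rel_pos r n1 m \<in> span {E1 $ of_nat a | a. a \<in> {1..k}}"
        using props by (simp add: span_neg)
      moreover have "r $ m + - r $ n1 = - rel_pos r n1 m" by (simp add: rel_pos_def)
      ultimately show ?thesis using QE[of "- rel_pos r n1 m"] by (simp only: mv_neg)
    qed
    have "f s r = f s (\<chi> j. r $ j + - r $ n1)" using f_trans[rule_format, of s r "- r $ n1"] by simp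
    also have "\<dots> = f s (\<chi> j. Q *v ((\<chi> j. r $ j + - r $ n1) $ j))" using f_O3[rule_format, OF Q, of s "\<chi> j. r $ j + - r $ n1"] by simp
    also have "\<dots> = f s (\<chi> m. - (E1 *v rel_pos r n1 m))" using Qm by simp
    finally have "f s r = h (id Z)" using hZ by simp
    then show "let n1 = inv idx 1; E1 = g (local_env idx s r n1) in
           f s r = h (id (\<Sum>j\<in>UNIV. \<phi> (E1 *v rel_pos r n1 j, node_feat idx s j)))"
      by (simp add: Let_def Z_def E1_def n1_def)
  qed
qed

end
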